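(* Let $A$ be a bounded distributive lattice with Priestley space $X$, and let $S\subseteq A$ be such that $\bigvee_A S$ exists. Then $\bigvee_A S$ is distributive if and only if $\mathfrak s(\bigvee_A S)={\sf cl}\bigcup_{s\in S}\mathfrak s(s)$.
   Context: A join $\bigvee_A S$ is distributive if $a\wedge\bigvee_A S=\bigvee_A\{a\wedge s:s\in S\}$ for all $a\in A$. The Priestley space $X$ of $A$ is the set of prime filters of $A$ ordered by inclusion, with topology generated by the basis $\{\mathfrak s(a)\setminus\mathfrak s(b):a,b\in A\}$, where $\mathfrak s(a)=\{x\in X:a\in x\}$; ${\sf cl}$ denotes topological closure in $X$. *)

theory Defs
  imports "HOL-Analysis.Analysis"
begin

definition is_join :: "'a::order set \<Rightarrow> 'a \<Rightarrow> bool" where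
  "is_join S j \<longleftrightarrow> (\<forall>s\<in>S. s \<le> j) \<and> (\<forall>u. (\<forall>s\<in>S. s \<le> u) \<longrightarrow> j \<le> u)"

definition distributive_join :: "'a::lattice set \<Rightarrow> 'a \<Rightarrow> bool" where
  "distributive_join S j \<longleftrightarrow> (\<forall>a. is_join ((\<lambda>s. inf a s) ` S) (inf a j))"

definition prime_filter :: "'a::bounded_lattice set \<Rightarrow> bool" where
  "prime_filter F \<longleftrightarrow> F \<noteq> {} \<and> F \<noteq> UNIV
     \<and> (\<forall>a b. a \<in> F \<and> a \<le> b \<longrightarrow> b \<in> F)
     \<and> (\<forall>a b. a \<in> F \<and> b \<in> F \<longrightarrow> inf a b \<in> F)
     \<and> (\<forall>a b. sup a b \<in> F \<longrightarrow> a \<in> F \<or> b \<in> F)"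

definition priestley_space :: "'a::bounded_lattice set set" where
  "priestley_space = {F. prime_filter F}"

definition sset :: "'a::bounded_lattice \<Rightarrow> 'a set set" where
  "sset a = {x \<in> priestley_space. a \<in> x}"

definition priestley_topology :: "'a::bounded_lattice set topology" where
  "priestley_topology = topology_generated_by {sset a - sset b | a b. True}"

end

theory Submission
  imports Defs
begin

lemma pf_up: "prime_filter (F::'a::bounded_lattice set) \<Longrightarrow> a \<in> F \<Longrightarrow> a \<le> b \<Longrightarrow> b \<in> F"
  unfolding prime_filter_def by blast

lemma pf_bot:
  assumes p: "prime_filter (F::'a::bounded_lattice set)"
  shows "bot \<notin> F"
proof
  assume "bot \<in> F"
  then have "x \<in> F" for x using pf_up[OF p, of bot x] by simp
  then have "F = UNIV" by blast
  then show False using p unfolding prime_filter_def by blast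
qed

lemma pf_top:
  assumes p: "prime_filter (F::'a::bounded_lattice set)"
  shows "top \<in> F"
proof -
  obtain a where "a \<in> F" using p unfolding prime_filter_def by auto
  then show ?thesis using pf_up[OF p, of a top] by simp
qed

lemma pf_inf_iff:
  assumes p: "prime_filter (F::'a::bounded_lattice set)"
  shows "inf a b \<in> F \<longleftrightarrow> a \<in> F \<and> b \<in> F"
proof
  assume "inf a b \<in> F"
  then show "a \<in> F \<and> b \<in> F" using pf_up[OF p _ inf_le1] pf_up[OF p _ inf_le2] by blast
next
  assume "a \<in> F \<and> b \<in> F"
  then show "inf a b \<in> F" using p unfolding prime_filter_def by blast
qed

lemma pf_sup_iff:
  assumes p: "prime_filter (F::'a::bounded_lattice set)"
  shows "sup a b \<in> F \<longleftrightarrow> a \<in> F \<or> b \<in> F"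
proof
  assume "sup a b \<in> F"
  then show "a \<in> F \<or> b \<in> F" using p unfolding prime_filter_def by blast
next
  assume "a \<in> F \<or> b \<in> F"
  then show "sup a b \<in> F" using pf_up[OF p _ sup_ge1] pf_up[OF p _ sup_ge2] by blast
qed

lemma sset_inf: "sset (inf a b) = sset a \<inter> sset (b::'a::bounded_lattice)"
  unfolding sset_def priestley_space_def by (auto simp: pf_inf_iff)

lemma sset_sup: "sset (sup a b) = sset a \<union> sset (b::'a::bounded_lattice)"
  unfolding sset_def priestley_space_def by (auto simp: pf_sup_iff)

lemma sset_mono: "a \<le> b \<Longrightarrow> sset a \<subseteq> sset (b::'a::bounded_lattice)"
  unfolding sset_def priestley_space_def using pf_up by fastforce

lemma topspace_pt: "topspace (priestley_topology::'a::bounded_lattice set topology) = priestley_space"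
proof -
  have 1: "sset (top::'a) - sset bot = priestley_space"
    using pf_bot pf_top by (auto simp: sset_def priestley_space_def)
  have "\<Union>{sset a - sset b | a b. True} = (priestley_space :: 'a set set)"
  proof
    show "\<Union>{sset a - sset b | a b. True} \<subseteq> (priestley_space :: 'a set set)"
      unfolding sset_def by blast
    have "sset (top::'a) - sset bot \<in> {sset a - sset b | a b. True}" by blast
    then show "(priestley_space :: 'a set set) \<subseteq> \<Union>{sset a - sset b | a b. True}"
      unfolding 1 by (rule Union_upper)
  qed
  then show ?thesis unfolding priestley_topology_def topology_generated_by_topspace .
qed

lemma open_basis:
  assumes "generate_topology_on {sset a - sset b | a b. True} T"
  shows "\<forall>x\<in>T. \<exists>a b. x \<in> sset a - sset (b::'a::bounded_lattice) \<and> sset a - sset b \<subseteq> T"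
  using assms
proof (induction rule: generate_topology_on.induct)
  case Empty
  then show ?case by auto
next
  case (Int a b)
  show ?case
  proof
    fix x assume "x \<in> a \<inter> b"
    then obtain a1 b1 a2 b2 where "x \<in> sset a1 - sset b1" "sset a1 - sset b1 \<subseteq> a"
      "x \<in> sset a2 - sset b2" "sset a2 - sset b2 \<subseteq> b" using Int.IH by blast
    then show "\<exists>c d. x \<in> sset c - sset d \<and> sset c - sset d \<subseteq> a \<inter> b"
      by (intro exI[of _ "inf a1 a2"] exI[of _ "sup b1 b2"]) (auto simp: sset_inf sset_sup)
  qed
next
  case (UN K)
  then show ?case by blast
next
  case (Basis s)
  then obtain a b where "s = sset a - sset b" by blast
  then show ?case by blast
qed

definition filt :: "'a::lattice set \<Rightarrow> bool" where
  "filt F \<longleftrightarrow> (\<forall>a b. a \<in> F \<and> a \<le> b \<longrightarrow> b \<in> F) \<and> (\<forall>a b. a \<in> F \<and> b \<in> F \<longrightarrow> inf a b \<in> F)"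

lemma prime_filter_thm:
  fixes c b :: "'a::{bounded_lattice, distrib_lattice}"
  assumes "\<not> c \<le> b"
  shows "\<exists>F. prime_filter F \<and> c \<in> F \<and> b \<notin> F"
proof -
  define A where "A = {F. filt F \<and> c \<in> F \<and> b \<notin> F}"
  have "\<forall>C\<in>chains A. \<exists>U\<in>A. \<forall>X\<in>C. X \<subseteq> U"
  proof
    fix C assume C: "C \<in> chains A"
    show "\<exists>U\<in>A. \<forall>X\<in>C. X \<subseteq> U"
    proof (cases "C = {}")
      case True
      have "{z. c \<le> z} \<in> A" using assms unfolding A_def filt_def by auto
      then show ?thesis using True by blast
    next
      case False
      have "\<Union>C \<in> A"
      proof -
        have sub: "C \<subseteq> A" and ch: "\<forall>X\<in>C. \<forall>Y\<in>C. X \<subseteq> Y \<or> Y \<subseteq> X"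
          using C unfolding chains_def chain_subset_def by auto
        have "filt (\<Union>C)"
          unfolding filt_def
        proof (intro conjI allI impI)
          fix x y assume "x \<in> \<Union>C \<and> x \<le> y"
          then show "y \<in> \<Union>C" using sub unfolding A_def filt_def by blast
        next
          fix x y assume "x \<in> \<Union>C \<and> y \<in> \<Union>C"
          then obtain X Y where XY: "X \<in> C" "Y \<in> C" "x \<in> X" "y \<in> Y" by auto
          from ch XY(1,2) have "X \<subseteq> Y \<or> Y \<subseteq> X" by blast
          then show "inf x y \<in> \<Union>C"
          proof
            assume "X \<subseteq> Y" then show ?thesis using XY sub unfolding A_def filt_def by blast
          next
            assume "Y \<subseteq> X" then show ?thesis using XY sub unfolding A_def filt_def by blast
          qed
        qed
        then show ?thesis using sub False unfolding A_def by auto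
      qed
      then show ?thesis by blast
    qed
  qed
  from Zorn_Lemma2[OF this] obtain M where M: "M \<in> A" and max: "\<forall>X\<in>A. M \<subseteq> X \<longrightarrow> X = M"
    by blast
  have Mf: "filt M" "c \<in> M" "b \<notin> M" using M unfolding A_def by auto
  have gen: "\<exists>f\<in>M. inf f p \<le> b" if "p \<notin> M" for p
  proof (rule ccontr)
    assume nb: "\<not> (\<exists>f\<in>M. inf f p \<le> b)"
    define N where "N = {z. \<exists>f\<in>M. inf f p \<le> z}"
    have "filt N" unfolding filt_def N_def
    proof (intro conjI allI impI)
      fix x y assume "x \<in> {z. \<exists>f\<in>M. inf f p \<le> z} \<and> x \<le> y"
      then show "y \<in> {z. \<exists>f\<in>M. inf f p \<le> z}" using order_trans by blast
    next
      fix x y assume "x \<in> {z. \<exists>f\<in>M. inf f p \<le> z} \<and> y \<in> {z. \<exists>f\<in>M. inf f p \<le> z}"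
      then obtain f g where fg: "f \<in> M" "g \<in> M" "inf f p \<le> x" "inf g p \<le> y" by auto
      have "inf f g \<in> M" using fg Mf unfolding filt_def by blast
      moreover have "inf (inf f g) p \<le> inf x y"
      proof -
        have 1: "inf (inf f g) p \<le> inf f p" by (rule inf_mono) simp_all
        have 2: "inf (inf f g) p \<le> inf g p" by (rule inf_mono) simp_all
        show ?thesis using order_trans[OF 1 fg(3)] order_trans[OF 2 fg(4)] by (rule le_infI)
      qed
      ultimately show "inf x y \<in> {z. \<exists>f\<in>M. inf f p \<le> z}" by blast
    qed
    moreover have "c \<in> N" unfolding N_def using Mf(2) inf_le1[of c p] by blast
    moreover have "b \<notin> N" using nb unfolding N_def by auto
    ultimately have "N \<in> A" unfolding A_def by auto
    moreover have "M \<subseteq> N" unfolding N_def using inf_le1 by blast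
    moreover have "p \<in> N" unfolding N_def using Mf(2) inf_le2[of c p] by blast
    ultimately show False using max that by blast
  qed
  have "prime_filter M"
    unfolding prime_filter_def
  proof (intro conjI allI impI)
    show "M \<noteq> {}" using Mf by auto
    show "M \<noteq> UNIV" using Mf by auto
    show "\<And>x y. x \<in> M \<and> x \<le> y \<Longrightarrow> y \<in> M" using Mf unfolding filt_def by blast
    show "\<And>x y. x \<in> M \<and> y \<in> M \<Longrightarrow> inf x y \<in> M" using Mf unfolding filt_def by blast
  next
    fix p q assume pq: "sup p q \<in> M"
    show "p \<in> M \<or> q \<in> M"
    proof (rule ccontr)
      assume "\<not> (p \<in> M \<or> q \<in> M)"
      then obtain f g where fg: "f \<in> M" "g \<in> M" "inf f p \<le> b" "inf g q \<le> b" using gen by blast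
      have "inf (inf f g) (sup p q) \<in> M" using fg pq Mf unfolding filt_def by blast
      moreover have "inf (inf f g) (sup p q) = sup (inf (inf f g) p) (inf (inf f g) q)"
        by (rule inf_sup_distrib1)
      moreover have "sup (inf (inf f g) p) (inf (inf f g) q) \<le> b"
      proof -
        have 1: "inf (inf f g) p \<le> inf f p" by (rule inf_mono) simp_all
        have 2: "inf (inf f g) q \<le> inf g q" by (rule inf_mono) simp_all
        show ?thesis using order_trans[OF 1 fg(3)] order_trans[OF 2 fg(4)] by (rule le_supI)
      qed
      ultimately have "inf (inf f g) (sup p q) \<in> M" "inf (inf f g) (sup p q) \<le> b" by simp_all
      then have "b \<in> M" using Mf(1) unfolding filt_def by blast
      then show False using Mf(3) by simp
    qed
  qed
  then show ?thesis using Mf by blast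
qed

theorem theorem5p16:
  fixes S :: "'a::{bounded_lattice, distrib_lattice} set" and j :: 'a
  assumes "is_join S j"
  shows "distributive_join S j \<longleftrightarrow>
           sset j = priestley_topology closure_of (\<Union>s\<in>S. sset s)"
proof -
  have ub: "\<And>s. s \<in> S \<Longrightarrow> s \<le> j" using assms unfolding is_join_def by auto
  have dj: "distributive_join S j \<longleftrightarrow> (\<forall>a u. (\<forall>s\<in>S. inf a s \<le> u) \<longrightarrow> inf a j \<le> u)"
    unfolding distributive_join_def is_join_def
  proof (intro iffI allI impI)
    fix a u assume "\<forall>a. (\<forall>s\<in>(\<lambda>s. inf a s) ` S. s \<le> inf a j) \<and> (\<forall>u. (\<forall>s\<in>(\<lambda>s. inf a s) ` S. s \<le> u) \<longrightarrow> inf a j \<le> u)"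
      and "\<forall>s\<in>S. inf a s \<le> u"
    then show "inf a j \<le> u" by simp
  next
    fix a assume H: "\<forall>a u. (\<forall>s\<in>S. inf a s \<le> u) \<longrightarrow> inf a j \<le> u"
    have "\<forall>s\<in>S. inf a s \<le> inf a j" using ub inf_mono by blast
    moreover have "\<forall>u. (\<forall>s\<in>(\<lambda>s. inf a s) ` S. s \<le> u) \<longrightarrow> inf a j \<le> u" using H by simp
    ultimately show "(\<forall>s\<in>(\<lambda>s. inf a s) ` S. s \<le> inf a j) \<and> (\<forall>u. (\<forall>s\<in>(\<lambda>s. inf a s) ` S. s \<le> u) \<longrightarrow> inf a j \<le> u)" by simp
  qed
  define U where "U = (\<Union>s\<in>S. sset s)"
  have cl_sub: "priestley_topology closure_of U \<subseteq> sset j"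
  proof (rule closure_of_minimal)
    show "U \<subseteq> sset j" unfolding U_def using ub sset_mono by blast
    have st: "sset top = priestley_space"
      unfolding sset_def priestley_space_def using pf_top by blast
    have "topspace priestley_topology - sset j = sset top - sset j"
      unfolding topspace_pt st ..
    moreover have "openin priestley_topology (sset top - sset j)"
      unfolding priestley_topology_def by (rule topology_generated_by_Basis) blast
    moreover have "sset j \<subseteq> topspace priestley_topology"
      unfolding topspace_pt sset_def by blast
    ultimately show "closedin priestley_topology (sset j)" unfolding closedin_def by simp
  qed
  have cl_iff: "x \<in> priestley_topology closure_of U \<longleftrightarrow>
     x \<in> priestley_space \<and> (\<forall>a b. x \<in> sset a - sset b \<longrightarrow> (\<exists>y\<in>U. y \<in> sset a - sset b))" for x
  proof
    assume "x \<in> priestley_topology closure_of U"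
    then have x1: "x \<in> priestley_space" and
      x2: "\<forall>T. x \<in> T \<and> openin priestley_topology T \<longrightarrow> (\<exists>y\<in>U. y \<in> T)"
      unfolding closure_of_def topspace_pt by simp_all
    have "\<exists>y\<in>U. y \<in> sset a - sset b" if "x \<in> sset a - sset b" for a b
    proof -
      have "openin priestley_topology (sset a - sset b)"
        unfolding priestley_topology_def by (rule topology_generated_by_Basis) blast
      then show ?thesis using x2 that by blast
    qed
    then show "x \<in> priestley_space \<and> (\<forall>a b. x \<in> sset a - sset b \<longrightarrow> (\<exists>y\<in>U. y \<in> sset a - sset b))"
      using x1 by blast
  next
    assume H: "x \<in> priestley_space \<and> (\<forall>a b. x \<in> sset a - sset b \<longrightarrow> (\<exists>y\<in>U. y \<in> sset a - sset b))"
    show "x \<in> priestley_topology closure_of U"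
      unfolding closure_of_def topspace_pt
    proof (intro CollectI conjI allI impI)
      show "x \<in> priestley_space" using H by simp
      fix T assume "x \<in> T \<and> openin priestley_topology T"
      then obtain a b where "x \<in> sset a - sset b" "sset a - sset b \<subseteq> T"
        using open_basis[of T] unfolding priestley_topology_def openin_topology_generated_by_iff
        by blast
      then show "\<exists>y\<in>U. y \<in> T" using H by blast
    qed
  qed
  show ?thesis
  proof
    assume D: "distributive_join S j"
    have "sset j \<subseteq> priestley_topology closure_of U"
    proof
      fix x assume x: "x \<in> sset j"
      have xX: "x \<in> priestley_space" using x unfolding sset_def by auto
      have "\<exists>y\<in>U. y \<in> sset a - sset b" if ab: "x \<in> sset a - sset b" for a b
        proof (rule ccontr)
          assume no: "\<not> (\<exists>y\<in>U. y \<in> sset a - sset b)"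
          have "\<forall>s\<in>S. inf a s \<le> b"
          proof (rule ballI, rule ccontr)
            fix s assume s: "s \<in> S" and "\<not> inf a s \<le> b"
            then obtain F where "prime_filter F" "inf a s \<in> F" "b \<notin> F"
              using prime_filter_thm[of "inf a s" b] by auto
            then have "F \<in> sset s" "F \<in> sset a - sset b"
              unfolding sset_def priestley_space_def by (auto simp: pf_inf_iff)
            then show False using no s unfolding U_def by blast
          qed
          then have ajb: "inf a j \<le> b" using D unfolding dj by blast
          have px: "prime_filter x" using x unfolding sset_def priestley_space_def by auto
          have jx: "j \<in> x" using x unfolding sset_def by blast
          have ax: "a \<in> x" using ab unfolding sset_def by blast
          have "inf a j \<in> x" using pf_inf_iff[OF px, of a j] jx ax by blast
          then have "b \<in> x" using pf_up[OF px _ ajb] by blast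
          then show False using ab unfolding sset_def by auto
        qed
      then have "\<forall>a b. x \<in> sset a - sset b \<longrightarrow> (\<exists>y\<in>U. y \<in> sset a - sset b)" by blast
      then show "x \<in> priestley_topology closure_of U" unfolding cl_iff using xX by (rule conjI[rotated])
    qed
    then show "sset j = priestley_topology closure_of (\<Union>s\<in>S. sset s)"
      using cl_sub unfolding U_def by blast
  next
    assume E: "sset j = priestley_topology closure_of (\<Union>s\<in>S. sset s)"
    show "distributive_join S j" unfolding dj
    proof (intro allI impI)
      fix a u assume au: "\<forall>s\<in>S. inf a s \<le> u"
      show "inf a j \<le> u"
      proof (rule ccontr)
        assume "\<not> inf a j \<le> u"
        then obtain x where x: "prime_filter x" "inf a j \<in> x" "u \<notin> x"
          using prime_filter_thm[of "inf a j" u] by auto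
        then have "x \<in> sset j" "x \<in> sset a - sset u"
          unfolding sset_def priestley_space_def by (auto simp: pf_inf_iff)
        then have xc: "x \<in> priestley_topology closure_of U" "x \<in> sset a - sset u"
          using E unfolding U_def by simp_all
        have "\<forall>a b. x \<in> sset a - sset b \<longrightarrow> (\<exists>y\<in>U. y \<in> sset a - sset b)"
          using xc(1) unfolding cl_iff by (rule conjunct2)
        then have "\<exists>y\<in>U. y \<in> sset a - sset u" using xc(2) by blast
        then obtain y where "y \<in> U" "y \<in> sset a - sset u" by blast
        then obtain s where "s \<in> S" "y \<in> sset s" "y \<in> sset a" "y \<notin> sset u" unfolding U_def by blast
        then have "prime_filter y" "s \<in> y" "a \<in> y" "u \<notin> y" "s \<in> S"
          unfolding sset_def priestley_space_def by auto
        then show False using au pf_inf_iff[of y a s] pf_up[of y "inf a s" u] by blast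
      qed
    qed
  qed
qed

end
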